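(* Let $S$ be an infinite semigroup and $\mu$ a left fairly invariant finitely-additive probability measure on $S$. If $S$ has a left zero $z$ (i.e. $zx=z$ for all $x\in S$), then $\mu(F)=0$ for every finite $F\subseteq S$. Similarly, if $\mu$ is right fairly invariant and $S$ has a right zero $z$ ($xz=z$ for all $x$), then $\mu(F)=0$ for every finite $F\subseteq S$.
   Context: For $s\in S$, $A\subseteq S$: $s$ acts injectively on the left (right) of $A$ if $a\mapsto sa$ ($a\mapsto as$) is injective on $A$. A finitely-additive probability measure is $\mu:\mathcal P(S)\to[0,1]$, $\mu(S)=1$, additive on disjoint sets. $\mu$ is left fairly invariant if $\mu(sA)=\mu(A)$ whenever $s$ acts injectively on the left of $A$; right fairly invariant if $\mu(As)=\mu(A)$ whenever $s$ acts injectively on the right of $A$. *)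

theory Defs
  imports Main "HOL.Real"
begin

definition fa_prob_measure :: "('a set \<Rightarrow> real) \<Rightarrow> bool" where
  "fa_prob_measure \<mu> \<longleftrightarrow>
     (\<forall>A. 0 \<le> \<mu> A \<and> \<mu> A \<le> 1) \<and> \<mu> UNIV = 1 \<and>
     (\<forall>A B. A \<inter> B = {} \<longrightarrow> \<mu> (A \<union> B) = \<mu> A + \<mu> B)"

definition left_fairly_invariant :: "('a::semigroup_mult set \<Rightarrow> real) \<Rightarrow> bool" where
  "left_fairly_invariant \<mu> \<longleftrightarrow>
     (\<forall>s A. inj_on (\<lambda>a. s * a) A \<longrightarrow> \<mu> ((\<lambda>a. s * a) ` A) = \<mu> A)"

definition right_fairly_invariant :: "('a::semigroup_mult set \<Rightarrow> real) \<Rightarrow> bool" where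
  "right_fairly_invariant \<mu> \<longleftrightarrow>
     (\<forall>s A. inj_on (\<lambda>a. a * s) A \<longrightarrow> \<mu> ((\<lambda>a. a * s) ` A) = \<mu> A)"

end

theory Submission
  imports Defs
begin

lemma fin_sum:
  assumes meas: "fa_prob_measure \<mu>" and sing: "\<And>a. \<mu> {a} = c"
  shows "finite F \<Longrightarrow> \<mu> F = real (card F) * c"
proof (induction F rule: finite_induct)
  case empty
  have "\<mu> ({} \<union> {}) = \<mu> {} + \<mu> {}" using meas unfolding fa_prob_measure_def by blast
  then show ?case by simp
next
  case (insert x F)
  have "\<mu> ({x} \<union> F) = \<mu> {x} + \<mu> F" using meas insert(2) unfolding fa_prob_measure_def by blast
  then show ?case using insert sing by (simp add: algebra_simps)
qed

lemma key:
  assumes inf: "infinite (UNIV :: 'a set)" and meas: "fa_prob_measure (\<mu> :: 'a set \<Rightarrow> real)"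
    and sing: "\<And>a. \<mu> {a} = c"
  shows "\<forall>F. finite F \<longrightarrow> \<mu> F = 0"
proof -
  have c0: "c \<ge> 0" using meas sing unfolding fa_prob_measure_def by metis
  have le: "real n * c \<le> 1" for n
  proof -
    obtain F :: "'a set" where "finite F" "card F = n" using infinite_arbitrarily_large[OF inf] by blast
    then show ?thesis using fin_sum[OF meas sing] meas unfolding fa_prob_measure_def by metis
  qed
  have "c = 0"
  proof (rule ccontr)
    assume "c \<noteq> 0" then have "c > 0" using c0 by simp
    obtain n where "2 / c < real n" using reals_Archimedean2 by blast
    then have "2 < real n * c" using \<open>c > 0\<close> by (simp add: field_simps)
    then show False using le[of n] by simp
  qed
  then show ?thesis using fin_sum[OF meas sing] by simp
qed

theorem mainTheorem7:
  fixes \<mu> :: "'a::semigroup_mult set \<Rightarrow> real"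
  assumes inf: "infinite (UNIV :: 'a set)"
    and meas: "fa_prob_measure \<mu>"
  shows "(left_fairly_invariant \<mu> \<and> (\<exists>z::'a. \<forall>x. z * x = z)
            \<longrightarrow> (\<forall>F. finite F \<longrightarrow> \<mu> F = 0))
       \<and> (right_fairly_invariant \<mu> \<and> (\<exists>z::'a. \<forall>x. x * z = z)
            \<longrightarrow> (\<forall>F. finite F \<longrightarrow> \<mu> F = 0))"
proof (intro conjI impI)
  assume h: "left_fairly_invariant \<mu> \<and> (\<exists>z::'a. \<forall>x. z * x = z)"
  then obtain z :: 'a where z: "\<forall>x. z * x = z" by blast
  have "\<mu> {a} = \<mu> {z}" for a
  proof -
    have "\<mu> ((\<lambda>b. z * b) ` {a}) = \<mu> {a}" using h unfolding left_fairly_invariant_def by (metis inj_on_def singletonD)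
    then show ?thesis using z by simp
  qed
  then show "\<forall>F. finite F \<longrightarrow> \<mu> F = 0" using key[OF inf meas] by blast
next
  assume h: "right_fairly_invariant \<mu> \<and> (\<exists>z::'a. \<forall>x. x * z = z)"
  then obtain z :: 'a where z: "\<forall>x. x * z = z" by blast
  have "\<mu> {a} = \<mu> {z}" for a
  proof -
    have "\<mu> ((\<lambda>b. b * z) ` {a}) = \<mu> {a}" using h unfolding right_fairly_invariant_def by (metis inj_on_def singletonD)
    then show ?thesis using z by simp
  qed
  then show "\<forall>F. finite F \<longrightarrow> \<mu> F = 0" using key[OF inf meas] by blast
qed

end
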